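(* Let $\tau_i$ be a task with period $p_i$ and execution time $c_i$, and let $\omega_k$ be a busy interval of length $l_k$ in a schedule as described in the context. Let $N\ge 0$ be an integer. (i) If $(Np_i-c_i)^+\le l_k<Np_i+c_i$, where $x^+=\max(x,0)$, then $\omega_k$ contains exactly $N$ jobs of $\tau_i$. (ii) If $Np_i+c_i\le l_k<(N+1)p_i-c_i$, then $\omega_k$ contains either $N$ or $N+1$ jobs of $\tau_i$.
   Context: Model: a single processor runs a set of periodic tasks $\tau_1,\dots,\tau_n$ under a preemptive, work-conserving, fixed-priority scheduler. Work-conserving means the processor is never idle while some released job is unfinished. Each task $\tau_i$ has a period $p_i>0$, a constant execution time $c_i$ with $0<c_i\le p_i$, an initial arrival time (offset) $a_i$, and a distinct fixed priority. Its $h$-th job is released at time $\sigma^{\tau_i}_h=a_i+hp_i$, for every $h\in\mathbb{Z}$; the schedule is considered as running forever in both directions of time. Each job needs exactly $c_i$ units of processor time. The schedule is assumed feasible, meaning every busy interval has finite length. A busy interval is a maximal time interval $[\alpha,\beta)$ during which the processor is continuously executing jobs. Its length is $l=\beta-\alpha$. Distinct busy intervals are separated by idle time. A busy interval contains a job if that job executes during it. Equivalently, the number of jobs of $\tau_i$ contained in $[\alpha,\beta)$ equals $|\{h\in\mathbb{Z}:\sigma^{\tau_i}_h\in[\alpha,\beta)\}|$. *)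

theory Defs
  imports "HOL-Analysis.Analysis"
begin

text \<open>A schedule S maps each time
  instant to the job (i, h) (task index, job index) executing at that instant,
  or None if the processor is idle. Priorities: a smaller value of prio means
  a higher priority.\<close>

definition release :: "(nat \<Rightarrow> real) \<Rightarrow> (nat \<Rightarrow> real) \<Rightarrow> nat \<Rightarrow> int \<Rightarrow> real" where
  "release p a i h = a i + real_of_int h * p i"

definition executed_before :: "(real \<Rightarrow> (nat \<times> int) option) \<Rightarrow> nat \<Rightarrow> int \<Rightarrow> real \<Rightarrow> ennreal" where
  "executed_before S i h t = emeasure lborel ({s. S s = Some (i, h)} \<inter> {..<t})"

definition pending ::
  "nat \<Rightarrow> (nat \<Rightarrow> real) \<Rightarrow> (nat \<Rightarrow> real) \<Rightarrow> (nat \<Rightarrow> real) \<Rightarrow> (real \<Rightarrow> (nat \<times> int) option)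
    \<Rightarrow> nat \<Rightarrow> int \<Rightarrow> real \<Rightarrow> bool" where
  "pending n p c a S i h t \<longleftrightarrow>
     i < n \<and> release p a i h \<le> t \<and> executed_before S i h t < ennreal (c i)"

text \<open>A preemptive, work-conserving, fixed-priority schedule of the periodic
  task set (p, c, a, prio) running forever in both directions of time, that is
  feasible (every busy interval has finite length).\<close>
definition valid_fp_schedule ::
  "nat \<Rightarrow> (nat \<Rightarrow> real) \<Rightarrow> (nat \<Rightarrow> real) \<Rightarrow> (nat \<Rightarrow> real) \<Rightarrow> (nat \<Rightarrow> nat)
    \<Rightarrow> (real \<Rightarrow> (nat \<times> int) option) \<Rightarrow> bool" where
  "valid_fp_schedule n p c a prio S \<longleftrightarrow>
     (\<forall>i<n. 0 < p i \<and> 0 < c i \<and> c i \<le> p i) \<and>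
     inj_on prio {..<n} \<and>
     \<comment> \<open>each job executes only on a measurable set, receiving exactly c_i units\<close>
     (\<forall>i h. {s. S s = Some (i, h)} \<in> sets lborel) \<and>
     (\<forall>i h. i < n \<longrightarrow> emeasure lborel {s. S s = Some (i, h)} = ennreal (c i)) \<and>
     \<comment> \<open>only released, unfinished jobs execute, and the executing job has the highest
         priority among pending jobs (preemptive fixed priority)\<close>
     (\<forall>t i h. S t = Some (i, h) \<longrightarrow>
        pending n p c a S i h t \<and> (\<forall>j g. pending n p c a S j g t \<longrightarrow> prio i \<le> prio j)) \<and>
     \<comment> \<open>work conserving\<close>
     (\<forall>t. (\<exists>i h. pending n p c a S i h t) \<longrightarrow> S t \<noteq> None) \<and>
     \<comment> \<open>feasible: no busy interval of infinite length\<close>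
     (\<forall>x. (\<exists>y\<ge>x. S y = None) \<and> (\<exists>y\<le>x. S y = None))"

definition busy_interval :: "(real \<Rightarrow> (nat \<times> int) option) \<Rightarrow> real \<Rightarrow> real \<Rightarrow> bool" where
  "busy_interval S \<alpha> \<beta> \<longleftrightarrow>
     \<alpha> < \<beta> \<and> (\<forall>t\<in>{\<alpha>..<\<beta>}. S t \<noteq> None) \<and>
     (\<forall>x y. x \<le> \<alpha> \<longrightarrow> \<beta> \<le> y \<longrightarrow> (\<forall>t\<in>{x..<y}. S t \<noteq> None) \<longrightarrow> x = \<alpha> \<and> y = \<beta>)"

definition jobs_in :: "(nat \<Rightarrow> real) \<Rightarrow> (nat \<Rightarrow> real) \<Rightarrow> nat \<Rightarrow> real \<Rightarrow> real \<Rightarrow> nat" where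
  "jobs_in p a i \<alpha> \<beta> = card {h::int. release p a i h \<in> {\<alpha>..<\<beta>}}"

end

theory Submission
  imports Defs
begin

lemma idle_after:
  assumes V: "valid_fp_schedule n p c a prio S" and i: "i < n"
    and St: "S t = None" and r: "release p a i h \<le> t"
  shows "release p a i h + c i \<le> t"
proof -
  have wc: "\<not> pending n p c a S i h t"
    using V St unfolding valid_fp_schedule_def by blast
  hence ge: "ennreal (c i) \<le> executed_before S i h t"
    using i r unfolding pending_def by auto
  have sub: "{s. S s = Some (i, h)} \<inter> {..<t} \<subseteq> {release p a i h..<t}"
  proof
    fix s assume "s \<in> {s. S s = Some (i, h)} \<inter> {..<t}"
    hence "S s = Some (i,h)" "s < t" by auto
    hence "pending n p c a S i h s" using V unfolding valid_fp_schedule_def by blast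
    thus "s \<in> {release p a i h..<t}" using \<open>s < t\<close> unfolding pending_def by auto
  qed
  have "executed_before S i h t \<le> emeasure lborel {release p a i h..<t}"
    unfolding executed_before_def by (rule emeasure_mono[OF sub]) simp
  also have "\<dots> = ennreal (t - release p a i h)" using r by simp
  finally have "ennreal (c i) \<le> ennreal (t - release p a i h)" using ge by (rule order_trans[rotated])
  hence "c i \<le> t - release p a i h" using r by (simp add: ennreal_le_iff)
  thus ?thesis by simp
qed

lemma rel_in:
  assumes V: "valid_fp_schedule n p c a prio S" and i: "i < n"
    and B: "busy_interval S \<alpha> \<beta>" and r: "\<alpha> \<le> release p a i h" and r2: "release p a i h < \<beta>"
  shows "release p a i h + c i \<le> \<beta>"
proof (rule field_le_epsilon)
  fix e :: real assume e: "0 < e"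
  have "\<not> (\<forall>t\<in>{\<alpha>..<\<beta>+e}. S t \<noteq> None)"
  proof
    assume "\<forall>t\<in>{\<alpha>..<\<beta>+e}. S t \<noteq> None"
    hence "\<beta> + e = \<beta>" using B e unfolding busy_interval_def by (meson le_add_same_cancel1 less_imp_le order_refl)
    thus False using e by simp
  qed
  then obtain t where t: "\<alpha> \<le> t" "t < \<beta> + e" "S t = None" by (meson atLeastLessThan_iff)
  have "\<beta> \<le> t" using t B unfolding busy_interval_def by (meson atLeastLessThan_iff not_le)
  have "release p a i h + c i \<le> t"
    using idle_after[OF V i t(3)] r2 \<open>\<beta> \<le> t\<close> by simp
  thus "release p a i h + c i \<le> \<beta> + e" using t by simp
qed

lemma rel_before:
  assumes V: "valid_fp_schedule n p c a prio S" and i: "i < n"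
    and B: "busy_interval S \<alpha> \<beta>" and r: "release p a i h < \<alpha>"
  shows "release p a i h + c i < \<alpha>"
proof -
  have "\<not> (\<forall>t\<in>{release p a i h..<\<beta>}. S t \<noteq> None)"
  proof
    assume "\<forall>t\<in>{release p a i h..<\<beta>}. S t \<noteq> None"
    hence "release p a i h = \<alpha>" using B r unfolding busy_interval_def by (meson less_imp_le order_refl)
    thus False using r by simp
  qed
  then obtain t where t: "release p a i h \<le> t" "t < \<beta>" "S t = None" by (meson atLeastLessThan_iff)
  have "t < \<alpha>" using t B unfolding busy_interval_def by (meson atLeastLessThan_iff not_le)
  thus ?thesis using idle_after[OF V i t(3) t(1)] by simp
qed

lemma H_finite:
  assumes p: "0 < p i"
  shows "finite {h::int. release p a i h \<in> {\<alpha>..<\<beta>}}"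
proof (rule finite_subset)
  show "{h::int. release p a i h \<in> {\<alpha>..<\<beta>}} \<subseteq> {floor ((\<alpha> - a i) / p i) .. ceiling ((\<beta> - a i) / p i)}"
  proof
    fix h assume "h \<in> {h::int. release p a i h \<in> {\<alpha>..<\<beta>}}"
    hence h: "\<alpha> \<le> a i + of_int h * p i" "a i + of_int h * p i < \<beta>" unfolding release_def by auto
    have "(\<alpha> - a i) / p i \<le> of_int h" using h p by (simp add: divide_le_eq)
    moreover have "of_int h \<le> (\<beta> - a i) / p i" using h p by (simp add: le_divide_eq)
    ultimately show "h \<in> {floor ((\<alpha> - a i) / p i) .. ceiling ((\<beta> - a i) / p i)}"
      by (simp add: floor_le_iff le_ceiling_iff)
  qed
qed simp

lemma upper:
  assumes V: "valid_fp_schedule n p c a prio S" and i: "i < n"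
    and B: "busy_interval S \<alpha> \<beta>" and K: "M + 1 \<le> jobs_in p a i \<alpha> \<beta>"
  shows "real M * p i + c i \<le> \<beta> - \<alpha>"
proof -
  define H where "H = {h::int. release p a i h \<in> {\<alpha>..<\<beta>}}"
  have p: "0 < p i" using V i unfolding valid_fp_schedule_def by auto
  have fin: "finite H" unfolding H_def by (rule H_finite[of p i, OF p])
  have cardH: "M + 1 \<le> card H" using K unfolding jobs_in_def H_def .
  hence ne: "H \<noteq> {}" by auto
  define lo where "lo = Min H"
  define hi where "hi = Max H"
  have lo: "lo \<in> H" and hi: "hi \<in> H" using fin ne unfolding lo_def hi_def by auto
  have "H \<subseteq> {lo..hi}" using fin unfolding lo_def hi_def by auto
  hence "card H \<le> card {lo..hi}" by (rule card_mono[rotated]) simp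
  hence "M + 1 \<le> nat (hi - lo + 1)" using cardH by simp
  hence d: "real M \<le> of_int (hi - lo)" by linarith
  have "real M * p i \<le> of_int (hi - lo) * p i" using d p by (simp add: mult_right_mono)
  moreover have "\<alpha> \<le> release p a i lo" "release p a i hi < \<beta>" "\<alpha> \<le> release p a i hi"
    using lo hi unfolding H_def by auto
  moreover have "release p a i hi + c i \<le> \<beta>" using rel_in[OF V i B] calculation by auto
  ultimately show ?thesis unfolding release_def by (simp add: algebra_simps)
qed

lemma lower:
  assumes V: "valid_fp_schedule n p c a prio S" and i: "i < n"
    and B: "busy_interval S \<alpha> \<beta>" and L: "real N * p i - c i \<le> \<beta> - \<alpha>"
  shows "N \<le> jobs_in p a i \<alpha> \<beta>"
proof -
  define H where "H = {h::int. release p a i h \<in> {\<alpha>..<\<beta>}}"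
  have p: "0 < p i" using V i unfolding valid_fp_schedule_def by auto
  have fin: "finite H" unfolding H_def by (rule H_finite[of p i, OF p])
  define h0 where "h0 = ceiling ((\<alpha> - a i) / p i)"
  have "(\<alpha> - a i) / p i \<le> of_int h0" unfolding h0_def by simp
  hence r0: "\<alpha> \<le> release p a i h0" using p unfolding release_def by (simp add: divide_le_eq)
  have "of_int (h0 - 1) < (\<alpha> - a i) / p i" unfolding h0_def by linarith
  hence "release p a i (h0 - 1) < \<alpha>" using p unfolding release_def by (simp add: less_divide_eq)
  hence r1: "release p a i (h0 - 1) + c i < \<alpha>" by (rule rel_before[OF V i B])
  have "{h0..h0 + int N - 1} \<subseteq> H"
  proof
    fix k assume k: "k \<in> {h0..h0 + int N - 1}"
    have "of_int h0 * p i \<le> of_int k * p i" using k p by (simp add: mult_right_mono)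
    hence ge: "\<alpha> \<le> release p a i k" using r0 unfolding release_def by simp
    have "of_int k * p i \<le> of_int (h0 - 1 + int N) * p i" using k p by (intro mult_right_mono) auto
    hence "release p a i k \<le> release p a i (h0 - 1) + real N * p i"
      unfolding release_def by (simp add: algebra_simps)
    hence "release p a i k < \<beta>" using r1 L by linarith
    thus "k \<in> H" using ge unfolding H_def by simp
  qed
  hence "card {h0..h0 + int N - 1} \<le> card H" using fin by (rule card_mono[rotated])
  thus ?thesis unfolding jobs_in_def H_def by simp
qed

theorem theorem1:
  fixes n :: nat and p c a :: "nat \<Rightarrow> real" and prio :: "nat \<Rightarrow> nat"
    and S :: "real \<Rightarrow> (nat \<times> int) option" and i :: nat and \<alpha> \<beta> :: real and N :: nat
  assumes "valid_fp_schedule n p c a prio S"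
    and "i < n"
    and "busy_interval S \<alpha> \<beta>"
  shows "(max (real N * p i - c i) 0 \<le> \<beta> - \<alpha> \<and> \<beta> - \<alpha> < real N * p i + c i
            \<longrightarrow> jobs_in p a i \<alpha> \<beta> = N)
       \<and> (real N * p i + c i \<le> \<beta> - \<alpha> \<and> \<beta> - \<alpha> < real (N + 1) * p i - c i
            \<longrightarrow> jobs_in p a i \<alpha> \<beta> = N \<or> jobs_in p a i \<alpha> \<beta> = N + 1)"
proof (intro conjI impI)
  have c: "0 < c i" using assms(1,2) unfolding valid_fp_schedule_def by auto
  assume h: "max (real N * p i - c i) 0 \<le> \<beta> - \<alpha> \<and> \<beta> - \<alpha> < real N * p i + c i"
  have "N \<le> jobs_in p a i \<alpha> \<beta>" using lower[OF assms] h by simp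
  moreover have "\<not> N + 1 \<le> jobs_in p a i \<alpha> \<beta>" using upper[OF assms, of N] h by linarith
  ultimately show "jobs_in p a i \<alpha> \<beta> = N" by simp
next
  have c: "0 < c i" using assms(1,2) unfolding valid_fp_schedule_def by auto
  assume h: "real N * p i + c i \<le> \<beta> - \<alpha> \<and> \<beta> - \<alpha> < real (N + 1) * p i - c i"
  have "N \<le> jobs_in p a i \<alpha> \<beta>" using lower[OF assms] h c by simp
  moreover have "\<not> N + 2 \<le> jobs_in p a i \<alpha> \<beta>" using upper[OF assms, of "N+1"] h c by (auto simp: algebra_simps)
  ultimately show "jobs_in p a i \<alpha> \<beta> = N \<or> jobs_in p a i \<alpha> \<beta> = N + 1" by linarith
qed

end
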